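(* Let $Y$ be a random vector in $\mathbb{R}^n$ (not necessarily Gaussian) with $\mathbb{E}[Y]=\theta$ and $\mathrm{Cov}(Y)=\sigma^2 I_n$, and let $g(y)=Sy$ for a fixed matrix $S\in\mathbb{R}^{n\times n}$. For any $\alpha>0$ and $B\ge1$, with the CB estimator constructed from $\omega^b\sim N(0,\sigma^2I_n)$ i.i.d. independent of $Y$, one has $\mathbb{E}[\mathrm{CB}_\alpha(g)]=\mathbb{E}\|\theta-SZ\|_2^2$, where $Z\sim N(\theta,(1+\alpha)\sigma^2 I_n)$.
   Context: CB construction: draw $\omega^1,\dots,\omega^B$ i.i.d. $N(0,\sigma^2 I_n)$ independent of $Y$, set $Y^{*b}=Y+\sqrt{\alpha}\,\omega^b$, $Y^{\dagger b}=Y-\omega^b/\sqrt{\alpha}$, and $$\mathrm{CB}_\alpha(g)=\frac1B\sum_{b=1}^B\Big(\|Y^{\dagger b}-g(Y^{*b})\|_2^2-\|\omega^b\|_2^2/\alpha\Big)-n\sigma^2 .$$ *)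

theory Defs
  imports "HOL-Probability.Probability"
begin

definition gauss_vec :: "real^'n \<Rightarrow> real \<Rightarrow> (real^'n) measure" where
  "gauss_vec mu s2 = density lborel
     (\<lambda>x. ennreal (\<Prod>i\<in>UNIV. normal_density (mu $ i) (sqrt s2) (x $ i)))"

text \<open>The CB estimator for the linear rule g(y) = S y, evaluated pointwise
  at the observed Y = y and the noise draws w 0, ..., w (B-1).\<close>
definition CB :: "real \<Rightarrow> nat \<Rightarrow> real \<Rightarrow> real^'n^'n \<Rightarrow> real^'n \<Rightarrow> (nat \<Rightarrow> real^'n) \<Rightarrow> real" where
  "CB \<alpha> B \<sigma> S y w =
     (1 / real B) * (\<Sum>b<B.
        (norm ((y - (1 / sqrt \<alpha>) *\<^sub>R w b) - S *v (y + sqrt \<alpha> *\<^sub>R w b)))\<^sup>2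
        - (norm (w b))\<^sup>2 / \<alpha>)
     - real CARD('n) * \<sigma>\<^sup>2"

end

theory Submission
  imports Defs
begin

lemma Basis_vec_axis: "Basis = range (\<lambda>i. axis i (1::real) :: real^'n)"
  by (auto simp: Basis_vec_def)

lemma inj_axis1: "inj (\<lambda>i. axis i (1::real) :: real^'n)"
  by (auto simp: inj_def axis_eq_axis)

definition idx :: "real^'n \<Rightarrow> 'n" where "idx b = (SOME i. b = axis i 1)"

lemma idx_axis[simp]: "idx (axis i (1::real)) = i"
  unfolding idx_def by (rule someI2[of _ i]) (auto simp: axis_eq_axis)

lemma prod_Basis_vec: "(\<Prod>b\<in>(Basis::(real^'n) set). H b) = (\<Prod>i\<in>UNIV. H (axis i 1))"
  unfolding Basis_vec_axis by (subst prod.reindex[OF inj_axis1]) simp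

lemma sum_Basis_vec_nth: "(\<Sum>b\<in>(Basis::(real^'n) set). f b *\<^sub>R b) $ i = f (axis i 1)"
proof -
  have "(\<Sum>b\<in>(Basis::(real^'n) set). f b *\<^sub>R b) $ i = (\<Sum>j\<in>UNIV. f (axis j 1) * axis j 1 $ i)"
    unfolding Basis_vec_axis by (subst sum.reindex[OF inj_axis1]) simp
  also have "\<dots> = f (axis i 1)"
    by (simp add: axis_def if_distrib cong: if_cong)
  finally show ?thesis .
qed

lemma lborel_vec_prod:
  fixes \<phi> :: "'n::finite \<Rightarrow> real \<Rightarrow> real"
  assumes int: "\<And>i. integrable lborel (\<phi> i)"
  shows "integrable lborel (\<lambda>x::real^'n. \<Prod>i\<in>UNIV. \<phi> i (x $ i))"
    and "(\<integral>x. (\<Prod>i\<in>UNIV. \<phi> i (x $ i)) \<partial>(lborel :: (real^'n) measure)) = (\<Prod>i\<in>UNIV. integral\<^sup>L lborel (\<phi> i))"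
proof -
  interpret P: product_sigma_finite "\<lambda>_::real^'n. lborel :: real measure"
    by standard
  have meas[measurable]: "\<And>i. \<phi> i \<in> borel_measurable borel"
    using int by (simp add: borel_measurable_integrable)
  let ?T = "\<lambda>f. \<Sum>b\<in>(Basis::(real^'n) set). f b *\<^sub>R b"
  have Tm: "?T \<in> measurable (\<Pi>\<^sub>M b\<in>Basis. lborel) borel" by measurable
  have Fm: "(\<lambda>x::real^'n. \<Prod>i\<in>UNIV. \<phi> i (x $ i)) \<in> borel_measurable borel" by measurable
  have eq0: "(\<Sum>b\<in>(Basis::(real^'n) set). f b * b $ i) = f (axis i 1)" for f i
    using sum_Basis_vec_nth[of f i] by simp
  have eq: "(\<Prod>i\<in>UNIV. \<phi> i (\<Sum>b\<in>(Basis::(real^'n) set). f b * b $ i)) = (\<Prod>b\<in>Basis. \<phi> (idx b) (f b))" for f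
    by (simp add: prod_Basis_vec eq0)
  have pint: "integrable (\<Pi>\<^sub>M b\<in>Basis. lborel) (\<lambda>f. \<Prod>b\<in>(Basis::(real^'n) set). \<phi> (idx b) (f b))"
    by (rule P.product_integrable_prod) (auto simp: int)
  show "integrable lborel (\<lambda>x::real^'n. \<Prod>i\<in>UNIV. \<phi> i (x $ i))"
    apply (subst lborel_eq)
    apply (subst integrable_distr_eq[OF Tm Fm])
    using pint by (simp add: eq)
  have "(\<integral>x. (\<Prod>i\<in>UNIV. \<phi> i (x $ i)) \<partial>(lborel :: (real^'n) measure))
      = (\<integral>f. (\<Prod>b\<in>(Basis::(real^'n) set). \<phi> (idx b) (f b)) \<partial>(\<Pi>\<^sub>M b\<in>Basis. lborel))"
    apply (subst lborel_eq)
    apply (subst integral_distr[OF Tm Fm])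
    by (simp add: eq)
  also have "\<dots> = (\<Prod>b\<in>(Basis::(real^'n) set). integral\<^sup>L lborel (\<phi> (idx b)))"
    by (rule P.product_integral_prod) (auto simp: int)
  also have "\<dots> = (\<Prod>i\<in>UNIV. integral\<^sup>L lborel (\<phi> i))"
    by (simp add: prod_Basis_vec)
  finally show "(\<integral>x. (\<Prod>i\<in>UNIV. \<phi> i (x $ i)) \<partial>(lborel :: (real^'n) measure)) = (\<Prod>i\<in>UNIV. integral\<^sup>L lborel (\<phi> i))" .
qed

lemma gauss_vec_prod:
  fixes mu :: "real^'n::finite" and g :: "'n \<Rightarrow> real \<Rightarrow> real"
  assumes s2: "s2 > 0"
    and gm: "\<And>i. g i \<in> borel_measurable borel"
    and int: "\<And>i. integrable lborel (\<lambda>t. normal_density (mu $ i) (sqrt s2) t * g i t)"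
  shows "integrable (gauss_vec mu s2) (\<lambda>x. \<Prod>i\<in>UNIV. g i (x $ i))"
    and "(\<integral>x. (\<Prod>i\<in>UNIV. g i (x $ i)) \<partial>gauss_vec mu s2)
         = (\<Prod>i\<in>UNIV. \<integral>t. normal_density (mu $ i) (sqrt s2) t * g i t \<partial>lborel)"
proof -
  let ?d = "\<lambda>x::real^'n. \<Prod>i\<in>UNIV. normal_density (mu $ i) (sqrt s2) (x $ i)"
  have [measurable]: "\<And>i. g i \<in> borel_measurable borel" by (rule gm)
  have dm: "?d \<in> borel_measurable lborel" by measurable
  have hm: "(\<lambda>x::real^'n. \<Prod>i\<in>UNIV. g i (x $ i)) \<in> borel_measurable lborel" by measurable
  have dnn: "AE x in lborel. 0 \<le> ?d x" by (simp add: prod_nonneg)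
  have eq: "?d x * (\<Prod>i\<in>UNIV. g i (x $ i)) = (\<Prod>i\<in>UNIV. normal_density (mu $ i) (sqrt s2) (x $ i) * g i (x $ i))" for x
    by (simp add: prod.distrib)
  note core = lborel_vec_prod[where \<phi>="\<lambda>i t. normal_density (mu $ i) (sqrt s2) t * g i t", OF int]
  show "integrable (gauss_vec mu s2) (\<lambda>x. \<Prod>i\<in>UNIV. g i (x $ i))"
    unfolding gauss_vec_def
    apply (subst integrable_density[OF hm dm dnn])
    using core(1) by (simp only: eq real_scaleR_def)
  show "(\<integral>x. (\<Prod>i\<in>UNIV. g i (x $ i)) \<partial>gauss_vec mu s2)
         = (\<Prod>i\<in>UNIV. \<integral>t. normal_density (mu $ i) (sqrt s2) t * g i t \<partial>lborel)"
    unfolding gauss_vec_def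
    apply (subst integral_density[OF hm dm dnn])
    using core(2) by (simp only: eq real_scaleR_def)
qed

definition mom :: "real \<Rightarrow> nat \<Rightarrow> real" where
  "mom s2 p = (if p = 0 then 1 else if p = 1 then 0 else s2)"

lemma normal_mom:
  assumes "s2 > 0" "p \<le> 2"
  shows "integrable lborel (\<lambda>t. normal_density m (sqrt s2) t * (t - m) ^ p)"
    and "(\<integral>t. normal_density m (sqrt s2) t * (t - m) ^ p \<partial>lborel) = mom s2 p"
proof -
  have sp: "sqrt s2 > 0" using assms by simp
  show "integrable lborel (\<lambda>t. normal_density m (sqrt s2) t * (t - m) ^ p)"
    by (rule integrable_normal_moment[OF sp])
  have "p = 0 \<or> p = 1 \<or> p = 2" using assms by auto
  then show "(\<integral>t. normal_density m (sqrt s2) t * (t - m) ^ p \<partial>lborel) = mom s2 p"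
  proof (elim disjE)
    assume "p = 0" then show ?thesis
      using integral_normal_moment_even[OF sp, where k=0 and \<mu>=m] by (simp add: mom_def)
  next
    assume "p = 1" then show ?thesis
      using integral_normal_moment_odd[OF sp, where k=0 and \<mu>=m] by (simp add: mom_def)
  next
    assume "p = 2" then show ?thesis
      using integral_normal_moment_even[OF sp, where k=1 and \<mu>=m] assms by (simp add: mom_def)
  qed
qed

lemma gauss_vec_mom:
  fixes mu :: "real^'n::finite"
  assumes s2: "s2 > 0" and p: "\<And>i. p i \<le> 2"
  shows "integrable (gauss_vec mu s2) (\<lambda>x. \<Prod>i\<in>UNIV. (x $ i - mu $ i) ^ p i)"
    and "(\<integral>x. (\<Prod>i\<in>UNIV. (x $ i - mu $ i) ^ p i) \<partial>gauss_vec mu s2) = (\<Prod>i\<in>UNIV. mom s2 (p i))"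
  using gauss_vec_prod[OF s2, where g="\<lambda>i t. (t - mu $ i) ^ p i"]
    normal_mom[OF s2 p] by auto

lemma gauss_vec_facts:
  fixes mu :: "real^'n::finite"
  assumes s2: "s2 > 0"
  shows "prob_space (gauss_vec mu s2)"
    and "\<And>j. integrable (gauss_vec mu s2) (\<lambda>x. x $ j - mu $ j)"
    and "\<And>j. (\<integral>x. x $ j - mu $ j \<partial>gauss_vec mu s2) = 0"
    and "\<And>j k. integrable (gauss_vec mu s2) (\<lambda>x. (x $ j - mu $ j) * (x $ k - mu $ k))"
    and "\<And>j k. (\<integral>x. (x $ j - mu $ j) * (x $ k - mu $ k) \<partial>gauss_vec mu s2) = (if j = k then s2 else 0)"
proof -
  let ?G = "gauss_vec mu s2"
  note M0 = gauss_vec_mom[OF s2, where p="\<lambda>_. 0" and mu=mu]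
  have c1: "integrable ?G (\<lambda>_. 1::real)" and c2: "(\<integral>x. 1 \<partial>?G) = (1::real)"
    using M0 by (simp_all add: mom_def)
  have fin: "emeasure ?G (space ?G) < \<infinity>"
    using c1 integrable_indicator_iff[of ?G UNIV] by (simp add: gauss_vec_def)
  have "measure ?G (space ?G) = 1" using c2 by simp
  then have "emeasure ?G (space ?G) = 1"
    using fin by (simp add: emeasure_eq_ennreal_measure)
  then show "prob_space ?G" by (rule prob_spaceI)
  fix j k :: 'n
  have pw1: "(\<Prod>i\<in>UNIV. (x $ i - mu $ i) ^ (if i = j then 1 else 0)) = x $ j - mu $ j" for x
    by (simp add: if_distrib prod.delta cong: if_cong)
  have mom1: "(\<Prod>i\<in>UNIV. mom s2 (if i = j then 1 else 0)) = 0"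
    by (simp add: if_distrib mom_def prod.delta cong: if_cong)
  note M1 = gauss_vec_mom[OF s2, where p="\<lambda>i. if i = j then 1 else 0" and mu=mu]
  show "integrable ?G (\<lambda>x. x $ j - mu $ j)" "(\<integral>x. x $ j - mu $ j \<partial>?G) = 0"
    using M1 by (simp_all only: pw1 mom1) simp_all
  let ?p = "\<lambda>i. (if i = j then 1 else 0) + (if i = k then 1 else (0::nat))"
  have pw2: "(\<Prod>i\<in>UNIV. (x $ i - mu $ i) ^ ?p i) = (x $ j - mu $ j) * (x $ k - mu $ k)" for x
  proof -
    have d: "(\<Prod>i\<in>UNIV. (x $ i - mu $ i) ^ (if i = l then 1 else 0)) = x $ l - mu $ l" for l
      by (simp add: if_distrib prod.delta cong: if_cong)
    have "(\<Prod>i\<in>UNIV. (x $ i - mu $ i) ^ ?p i) = (\<Prod>i\<in>UNIV. (x $ i - mu $ i) ^ (if i = j then 1 else 0)) * (\<Prod>i\<in>UNIV. (x $ i - mu $ i) ^ (if i = k then 1 else 0))"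
      by (simp only: power_add prod.distrib)
    then show ?thesis by (simp only: d)
  qed
  have mom2: "(\<Prod>i\<in>UNIV. mom s2 (?p i)) = (if j = k then s2 else 0)"
  proof (cases "j = k")
    case True
    then have "(\<Prod>i\<in>UNIV. mom s2 (?p i)) = (\<Prod>i\<in>UNIV. if i = j then s2 else 1)"
      by (intro prod.cong) (auto simp: mom_def)
    then show ?thesis using True by (simp add: prod.delta)
  next
    case False
    then have "mom s2 (?p j) = 0" by (simp add: mom_def)
    then have "(\<Prod>i\<in>UNIV. mom s2 (?p i)) = 0"
      by (intro prod_zero) auto
    then show ?thesis using False by simp
  qed
  note M2 = gauss_vec_mom[OF s2, where p="?p" and mu=mu]
  have pl: "\<And>i. ?p i \<le> 2" by auto
  show "integrable ?G (\<lambda>x. (x $ j - mu $ j) * (x $ k - mu $ k))"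
    "(\<integral>x. (x $ j - mu $ j) * (x $ k - mu $ k) \<partial>?G) = (if j = k then s2 else 0)"
    using M2[OF pl] by (simp_all only: pw2 mom2)
qed

lemma quad_moment:
  fixes X :: "'a \<Rightarrow> real^'n::finite" and L :: "real^'n^'n" and c m :: "real^'n"
  assumes N: "prob_space N"
    and i1: "\<And>j. integrable N (\<lambda>x. X x $ j - m $ j)"
    and e1: "\<And>j. (\<integral>x. X x $ j - m $ j \<partial>N) = 0"
    and i2: "\<And>j k. integrable N (\<lambda>x. (X x $ j - m $ j) * (X x $ k - m $ k))"
    and e2: "\<And>j k. (\<integral>x. (X x $ j - m $ j) * (X x $ k - m $ k) \<partial>N) = (if j = k then sv else 0)"
  shows "integrable N (\<lambda>x. (norm (L *v X x + c))\<^sup>2)"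
    and "(\<integral>x. (norm (L *v X x + c))\<^sup>2 \<partial>N) = (norm (L *v m + c))\<^sup>2 + sv * (\<Sum>i\<in>UNIV. \<Sum>j\<in>UNIV. (L $ i $ j)\<^sup>2)"
proof -
  interpret prob_space N by (rule N)
  define D where "D j x = X x $ j - m $ j" for j x
  define K where "K = L *v m + c"
  have comp: "(L *v X x + c) $ i = K $ i + (\<Sum>j\<in>UNIV. L $ i $ j * D j x)" for x i
    by (simp add: K_def D_def matrix_vector_mult_def algebra_simps sum.distrib sum_subtractf)
  have nsq: "(norm v)\<^sup>2 = (\<Sum>i\<in>UNIV. (v $ i)\<^sup>2)" for v :: "real^'n"
    unfolding power2_norm_eq_inner inner_vec_def by (simp add: power2_eq_square)
  have pw: "(norm (L *v X x + c))\<^sup>2 = (\<Sum>i\<in>UNIV. (K $ i)\<^sup>2 + 2 * K $ i * (\<Sum>j\<in>UNIV. L $ i $ j * D j x)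
      + (\<Sum>j\<in>UNIV. \<Sum>k\<in>UNIV. L $ i $ j * L $ i $ k * (D j x * D k x)))" for x
    unfolding nsq comp
    by (intro sum.cong refl) (simp add: power2_eq_square sum_product algebra_simps sum_distrib_left)
  have I1: "integrable N (D j)" for j using i1 by (simp add: D_def[abs_def])
  have E1: "integral\<^sup>L N (D j) = 0" for j using e1 by (simp add: D_def[abs_def])
  have I2: "integrable N (\<lambda>x. D j x * D k x)" for j k using i2 by (simp add: D_def)
  have E2: "(\<integral>x. D j x * D k x \<partial>N) = (if j = k then sv else 0)" for j k using e2 by (simp add: D_def)
  show "integrable N (\<lambda>x. (norm (L *v X x + c))\<^sup>2)"
    unfolding pw
  proof (rule Bochner_Integration.integrable_sum)
    fix i
    have a: "integrable N (\<lambda>x. 2 * K $ i * (\<Sum>j\<in>UNIV. L $ i $ j * D j x))"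
      using I1 by (intro Bochner_Integration.integrable_mult_right Bochner_Integration.integrable_sum) auto
    have b: "integrable N (\<lambda>x. \<Sum>j\<in>UNIV. \<Sum>k\<in>UNIV. L $ i $ j * L $ i $ k * (D j x * D k x))"
      using I2 by (intro Bochner_Integration.integrable_sum Bochner_Integration.integrable_mult_right) auto
    show "integrable N (\<lambda>x. (K $ i)\<^sup>2 + 2 * K $ i * (\<Sum>j\<in>UNIV. L $ i $ j * D j x)
      + (\<Sum>j\<in>UNIV. \<Sum>k\<in>UNIV. L $ i $ j * L $ i $ k * (D j x * D k x)))"
      by (intro Bochner_Integration.integrable_add a b integrable_const)
  qed
  have "(\<integral>x. (norm (L *v X x + c))\<^sup>2 \<partial>N) = (\<Sum>i\<in>UNIV. (K $ i)\<^sup>2 + 2 * K $ i * (\<Sum>j\<in>UNIV. L $ i $ j * integral\<^sup>L N (D j))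
      + (\<Sum>j\<in>UNIV. \<Sum>k\<in>UNIV. L $ i $ j * L $ i $ k * (\<integral>x. D j x * D k x \<partial>N)))"
    unfolding pw
    by (simp add: Bochner_Integration.integrable_sum Bochner_Integration.integrable_add Bochner_Integration.integrable_mult_right I1 I2 Bochner_Integration.integral_sum
        integral_add integral_mult_right_zero prob_space)
  also have "\<dots> = (\<Sum>i\<in>UNIV. (K $ i)\<^sup>2) + sv * (\<Sum>i\<in>UNIV. \<Sum>j\<in>UNIV. (L $ i $ j)\<^sup>2)"
    by (simp add: E1 E2 if_distrib sum.distrib sum_distrib_left power2_eq_square algebra_simps cong: if_cong)
  also have "\<dots> = (norm (L *v m + c))\<^sup>2 + sv * (\<Sum>i\<in>UNIV. \<Sum>j\<in>UNIV. (L $ i $ j)\<^sup>2)"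
    by (simp only: nsq K_def)
  finally show "(\<integral>x. (norm (L *v X x + c))\<^sup>2 \<partial>N) = (norm (L *v m + c))\<^sup>2 + sv * (\<Sum>i\<in>UNIV. \<Sum>j\<in>UNIV. (L $ i $ j)\<^sup>2)" .
qed

lemma sum_mult_delta:
  fixes z :: "'n::finite \<Rightarrow> real"
  shows "(\<Sum>j\<in>UNIV. z j * (if i = j then a else 0)) = z i * a"
proof -
  have "(\<Sum>j\<in>UNIV. z j * (if i = j then a else 0)) = (\<Sum>j\<in>UNIV. if i = j then z j * a else 0)"
    by (rule sum.cong) auto
  also have "\<dots> = z i * a" by (subst sum.delta') auto
  finally show ?thesis .
qed

lemma sum_delta_mult:
  fixes z :: "'n::finite \<Rightarrow> real"
  shows "(\<Sum>j\<in>UNIV. (if i = j then a else 0) * z j) = a * z i"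
  using sum_mult_delta[of z i a] by (simp add: mult.commute)

lemma sum_delta_plus:
  fixes z f :: "'n::finite \<Rightarrow> real"
  shows "(\<Sum>j\<in>UNIV. ((if i = j then a else 0) + f j) * z j) = a * z i + (\<Sum>j\<in>UNIV. f j * z j)"
proof -
  have "(\<Sum>j\<in>UNIV. ((if i = j then a else 0) + f j) * z j) = (\<Sum>j\<in>UNIV. (if i = j then a * z j else 0)) + (\<Sum>j\<in>UNIV. f j * z j)"
    by (subst sum.distrib[symmetric]) (intro sum.cong, auto simp: algebra_simps)
  then show ?thesis by simp
qed

lemma sum_delta_minus:
  fixes z f :: "'n::finite \<Rightarrow> real"
  shows "(\<Sum>j\<in>UNIV. ((if i = j then a else 0) - f j) * z j) = a * z i - (\<Sum>j\<in>UNIV. f j * z j)"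
  using sum_delta_plus[of i a "\<lambda>j. - f j" z] by (simp add: sum_negf)

theorem mainTheorem3:
  fixes M :: "'a measure"
    and Y :: "'a \<Rightarrow> real^'n"
    and \<omega> :: "nat \<Rightarrow> 'a \<Rightarrow> real^'n"
    and \<theta> :: "real^'n"
    and S :: "real^'n^'n"
    and \<sigma> \<alpha> :: real
    and B :: nat
  assumes "prob_space M"
    and "\<sigma> > 0" and "\<alpha> > 0" and "B \<ge> 1"
    and Y_meas: "Y \<in> borel_measurable M"
    and Y_mean: "integrable M Y" "prob_space.expectation M Y = \<theta>"
    and Y_cov: "\<And>i j. integrable M (\<lambda>x. (Y x $ i - \<theta> $ i) * (Y x $ j - \<theta> $ j))"
      "\<And>i j. prob_space.expectation M (\<lambda>x. (Y x $ i - \<theta> $ i) * (Y x $ j - \<theta> $ j))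
              = (if i = j then \<sigma>\<^sup>2 else 0)"
    and \<omega>_meas: "\<And>b. b < B \<Longrightarrow> \<omega> b \<in> borel_measurable M"
    and \<omega>_gauss: "\<And>b. b < B \<Longrightarrow> distr M lborel (\<omega> b) = gauss_vec 0 (\<sigma>\<^sup>2)"
    and indep: "prob_space.indep_vars M (\<lambda>_. borel)
                  (\<lambda>k. case k of None \<Rightarrow> Y | Some b \<Rightarrow> \<omega> b)
                  (insert None (Some ` {..<B}))"
  shows "prob_space.expectation M (\<lambda>x. CB \<alpha> B \<sigma> S (Y x) (\<lambda>b. \<omega> b x))
         = (\<integral>z. (norm (\<theta> - S *v z))\<^sup>2 \<partial>(gauss_vec \<theta> ((1 + \<alpha>) * \<sigma>\<^sup>2)))"
proof -
  interpret prob_space M by fact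
  have sig: "\<sigma>\<^sup>2 > 0" using \<open>\<sigma> > 0\<close> by simp
  have alp: "\<alpha> > 0" by fact
  have sa: "sqrt \<alpha> > 0" using alp by simp
  have sa2: "(sqrt \<alpha>)\<^sup>2 = \<alpha>" using alp by simp
  define G0 where "G0 = gauss_vec (0::real^'n) (\<sigma>\<^sup>2)"
  define A :: "real^'n^'n" where "A = (\<chi> i j. (if i = j then 1 else 0) - S $ i $ j)"
  define C :: "real^'n^'n" where "C = (\<chi> i j. (if i = j then 1 / sqrt \<alpha> else 0) + sqrt \<alpha> * S $ i $ j)"
  define I :: "real^'n^'n" where "I = (\<chi> i j. if i = j then 1 else 0)"
  note GF0 = gauss_vec_facts[OF sig, where mu="0::real^'n", folded G0_def]
  interpret G0: prob_space G0 by (rule GF0(1))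
  have om_lb: "\<omega> b \<in> measurable M lborel" if "b < B" for b
    using \<omega>_meas[OF that] by simp
  have tr_int: "integrable M (\<lambda>x. f (\<omega> b x)) = integrable G0 f"
    if "b < B" "f \<in> borel_measurable borel" for b and f :: "real^'n \<Rightarrow> real"
    using integrable_distr_eq[OF om_lb[OF that(1)], of f] that \<omega>_gauss[OF that(1)] by (simp add: G0_def)
  have tr_eq: "(\<integral>x. f (\<omega> b x) \<partial>M) = integral\<^sup>L G0 f"
    if "b < B" "f \<in> borel_measurable borel" for b and f :: "real^'n \<Rightarrow> real"
    using integral_distr[OF om_lb[OF that(1)], of f] that \<omega>_gauss[OF that(1)] by (simp add: G0_def)
  have QG: "integrable G0 (\<lambda>x. (norm (L *v x + 0))\<^sup>2)"
           "(\<integral>x. (norm (L *v x + 0))\<^sup>2 \<partial>G0) = \<sigma>\<^sup>2 * (\<Sum>i\<in>UNIV. \<Sum>j\<in>UNIV. (L $ i $ j)\<^sup>2)" for L :: "real^'n^'n"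
    using quad_moment[OF GF0(1), where X="\<lambda>x. x" and m=0 and L=L and c=0 and sv="\<sigma>\<^sup>2"] GF0 by auto
  have nm_meas: "(\<lambda>x. (norm (L *v x))\<^sup>2) \<in> borel_measurable (borel :: (real^'n) measure)" for L :: "real^'n^'n"
    by (intro borel_measurable_continuous_onI continuous_intros)
  have QW: "integrable M (\<lambda>x. (norm (L *v \<omega> b x))\<^sup>2)"
           "(\<integral>x. (norm (L *v \<omega> b x))\<^sup>2 \<partial>M) = \<sigma>\<^sup>2 * (\<Sum>i\<in>UNIV. \<Sum>j\<in>UNIV. (L $ i $ j)\<^sup>2)" if "b < B" for L :: "real^'n^'n" and b
    using QG[of L] tr_int[OF that nm_meas[of L]] tr_eq[OF that nm_meas[of L]] by auto
  have Yc_int: "integrable M (\<lambda>x. Y x $ j)" for j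
    using integrable_bounded_linear[OF bounded_linear_vec_nth Y_mean(1)] .
  have Yc_eq: "(\<integral>x. Y x $ j \<partial>M) = \<theta> $ j" for j
    using integral_bounded_linear[OF bounded_linear_vec_nth Y_mean(1)] Y_mean(2) by simp
  have QY: "integrable M (\<lambda>x. (norm (L *v Y x + 0))\<^sup>2)"
           "(\<integral>x. (norm (L *v Y x + 0))\<^sup>2 \<partial>M) = (norm (L *v \<theta> + 0))\<^sup>2 + \<sigma>\<^sup>2 * (\<Sum>i\<in>UNIV. \<Sum>j\<in>UNIV. (L $ i $ j)\<^sup>2)" for L :: "real^'n^'n"
    using quad_moment[OF \<open>prob_space M\<close>, where X=Y and m=\<theta> and L=L and c=0 and sv="\<sigma>\<^sup>2"] Y_cov Yc_int Yc_eq
    by (auto simp: prob_space)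

  have ind_b: "indep_var borel Y borel (\<omega> b)" if "b < B" for b
  proof -
    let ?X = "\<lambda>k. case k of None \<Rightarrow> Y | Some b \<Rightarrow> \<omega> b"
    have r: "indep_var (Pi\<^sub>M {None} (\<lambda>_. borel)) (\<lambda>x. restrict (\<lambda>k. ?X k x) {None})
                 (Pi\<^sub>M {Some b} (\<lambda>_. borel)) (\<lambda>x. restrict (\<lambda>k. ?X k x) {Some b})"
      using that by (intro indep_var_restrict[OF indep]) auto
    have "indep_var borel ((\<lambda>f. f None) \<circ> (\<lambda>x. restrict (\<lambda>k. ?X k x) {None}))
                    borel ((\<lambda>f. f (Some b)) \<circ> (\<lambda>x. restrict (\<lambda>k. ?X k x) {Some b}))"
      by (rule indep_var_compose[OF r]) (auto intro: measurable_component_singleton)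
    then show ?thesis by (simp add: comp_def)
  qed
  define u where "u i x = (\<Sum>j\<in>UNIV. A $ i $ j * Y x $ j)" for i x
  define v where "v b i x = (\<Sum>j\<in>UNIV. C $ i $ j * \<omega> b x $ j)" for b i x
  have lin_meas: "(\<lambda>y::real^'n. \<Sum>j\<in>UNIV. K $ i $ j * y $ j) \<in> borel_measurable borel" for K :: "real^'n^'n" and i
    by (intro borel_measurable_continuous_onI continuous_intros)
  have ind_uv: "indep_var borel (u i) borel (v b i)" if "b < B" for b i
    using indep_var_compose[OF ind_b[OF that] lin_meas[of A i] lin_meas[of C i]]
    by (simp add: comp_def u_def[abs_def] v_def[abs_def])
  have u_int: "integrable M (u i)" for i
    unfolding u_def[abs_def] using Yc_int by auto
  have wc_int: "integrable M (\<lambda>x. \<omega> b x $ j)" if "b < B" for b j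
    using tr_int[OF that, of "\<lambda>x. x $ j"] GF0(2)[of j] by simp
  have wc_eq: "(\<integral>x. \<omega> b x $ j \<partial>M) = 0" if "b < B" for b j
    using tr_eq[OF that, of "\<lambda>x. x $ j"] GF0(3)[of j] by simp
  have v_int: "integrable M (v b i)" if "b < B" for b i
    unfolding v_def[abs_def] using wc_int[OF that] by auto
  have v_eq: "integral\<^sup>L M (v b i) = 0" if "b < B" for b i
    unfolding v_def[abs_def] using wc_int[OF that] wc_eq[OF that] by (simp add: Bochner_Integration.integral_sum)
  have uv_int: "integrable M (\<lambda>x. u i x * v b i x)" if "b < B" for b i
    using indep_var_integrable[OF ind_uv[OF that] u_int v_int[OF that]] .
  have uv_eq: "(\<integral>x. u i x * v b i x \<partial>M) = 0" if "b < B" for b i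
    using indep_var_lebesgue_integral[OF ind_uv[OF that] u_int v_int[OF that]] v_eq[OF that] by simp
  have key: "(y - (1 / sqrt \<alpha>) *\<^sub>R w) - S *v (y + sqrt \<alpha> *\<^sub>R w) = A *v y - C *v w" for y w :: "real^'n"
    by (simp add: vec_eq_iff A_def C_def matrix_vector_mult_def sum_delta_plus sum_delta_minus sum_mult_delta
        algebra_simps sum.distrib sum_subtractf sum_distrib_left)
  have Iv: "I *v w = w" for w :: "real^'n"
    by (simp add: vec_eq_iff I_def matrix_vector_mult_def sum_delta_mult)
  have ndiff: "(norm (a - c))\<^sup>2 = (norm a)\<^sup>2 - 2 * (a \<bullet> c) + (norm c)\<^sup>2" for a c :: "real^'n"
    by (simp add: power2_norm_eq_inner inner_diff_left inner_diff_right inner_commute)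
  have inn: "(A *v y) \<bullet> (C *v w) = (\<Sum>i\<in>UNIV. (\<Sum>j\<in>UNIV. A $ i $ j * y $ j) * (\<Sum>j\<in>UNIV. C $ i $ j * w $ j))" for y w :: "real^'n"
    by (simp add: inner_vec_def matrix_vector_mult_def)
  define t where "t b x = (norm (A *v Y x + 0))\<^sup>2 - 2 * (\<Sum>i\<in>UNIV. u i x * v b i x)
      + (norm (C *v \<omega> b x))\<^sup>2 - (norm (I *v \<omega> b x))\<^sup>2 / \<alpha>" for b x
  have tb: "(norm ((Y x - (1 / sqrt \<alpha>) *\<^sub>R \<omega> b x) - S *v (Y x + sqrt \<alpha> *\<^sub>R \<omega> b x)))\<^sup>2
        - (norm (\<omega> b x))\<^sup>2 / \<alpha> = t b x" for b x
    unfolding key ndiff t_def inn Iv u_def v_def by simp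
  define Kc where "Kc = (norm (A *v \<theta> + 0))\<^sup>2 + \<sigma>\<^sup>2 * (\<Sum>i\<in>UNIV. \<Sum>j\<in>UNIV. (A $ i $ j)\<^sup>2)
      + \<sigma>\<^sup>2 * (\<Sum>i\<in>UNIV. \<Sum>j\<in>UNIV. (C $ i $ j)\<^sup>2) - \<sigma>\<^sup>2 * (\<Sum>i\<in>UNIV. \<Sum>j\<in>UNIV. (I $ i $ j)\<^sup>2) / \<alpha>"
  have t_int: "integrable M (t b)" if "b < B" for b
    unfolding t_def[abs_def]
    using QY(1)[of A] QW(1)[OF that, of C] QW(1)[OF that, of I] uv_int[OF that] by auto
  have t_eq: "integral\<^sup>L M (t b) = Kc" if "b < B" for b
    unfolding t_def[abs_def]
    using QY[of A] QW[OF that, of C] QW[OF that, of I] uv_int[OF that] uv_eq[OF that]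
    by (simp add: Kc_def Bochner_Integration.integral_sum)
  have CBx: "CB \<alpha> B \<sigma> S (Y x) (\<lambda>b. \<omega> b x) = (1 / real B) * (\<Sum>b<B. t b x) - real CARD('n) * \<sigma>\<^sup>2" for x
    unfolding CB_def tb ..
  have LHS: "expectation (\<lambda>x. CB \<alpha> B \<sigma> S (Y x) (\<lambda>b. \<omega> b x)) = Kc - real CARD('n) * \<sigma>\<^sup>2"
  proof -
    have "expectation (\<lambda>x. CB \<alpha> B \<sigma> S (Y x) (\<lambda>b. \<omega> b x))
        = (1 / real B) * (\<Sum>b<B. integral\<^sup>L M (t b)) - real CARD('n) * \<sigma>\<^sup>2"
    proof -
      have si: "integrable M (\<lambda>x. \<Sum>b<B. t b x)"
        by (rule Bochner_Integration.integrable_sum) (simp add: t_int)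
      have "expectation (\<lambda>x. (1 / real B) * (\<Sum>b<B. t b x) - real CARD('n) * \<sigma>\<^sup>2)
          = expectation (\<lambda>x. (1 / real B) * (\<Sum>b<B. t b x)) - expectation (\<lambda>x. real CARD('n) * \<sigma>\<^sup>2)"
        using si by (intro Bochner_Integration.integral_diff) auto
      also have "expectation (\<lambda>x. (1 / real B) * (\<Sum>b<B. t b x)) = (1 / real B) * expectation (\<lambda>x. \<Sum>b<B. t b x)"
        by (rule integral_mult_right_zero)
      also have "expectation (\<lambda>x. \<Sum>b<B. t b x) = (\<Sum>b<B. integral\<^sup>L M (t b))"
        using t_int by (intro Bochner_Integration.integral_sum) auto
      finally show ?thesis unfolding CBx by (simp add: prob_space)
    qed
    also have "(\<Sum>b<B. integral\<^sup>L M (t b)) = (\<Sum>b<B. Kc)"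
      by (rule sum.cong) (auto simp: t_eq)
    finally show ?thesis using \<open>B \<ge> 1\<close> by simp
  qed
  define NS :: "real^'n^'n" where "NS = (\<chi> i j. - S $ i $ j)"
  define GT where "GT = gauss_vec \<theta> ((1 + \<alpha>) * \<sigma>\<^sup>2)"
  have sigT: "(1 + \<alpha>) * \<sigma>\<^sup>2 > 0" using sig alp by simp
  note GFT = gauss_vec_facts[OF sigT, where mu=\<theta>, folded GT_def]
  have QT: "(\<integral>x. (norm (NS *v x + \<theta>))\<^sup>2 \<partial>GT) = (norm (NS *v \<theta> + \<theta>))\<^sup>2 + (1 + \<alpha>) * \<sigma>\<^sup>2 * (\<Sum>i\<in>UNIV. \<Sum>j\<in>UNIV. (NS $ i $ j)\<^sup>2)"
    using quad_moment[OF GFT(1), where X="\<lambda>x. x" and m=\<theta> and L=NS and c=\<theta> and sv="(1 + \<alpha>) * \<sigma>\<^sup>2"] GFT by auto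
  have nsv: "NS *v z + \<theta> = \<theta> - S *v z" for z
    by (simp add: vec_eq_iff NS_def matrix_vector_mult_def sum_negf)
  have Av: "A *v \<theta> + 0 = NS *v \<theta> + \<theta>"
    by (simp add: vec_eq_iff NS_def A_def matrix_vector_mult_def sum_negf sum_delta_minus)
  have ss1: "sqrt \<alpha> * sqrt \<alpha> = \<alpha>" using alp by simp
  have ss2: "sqrt \<alpha> * (sqrt \<alpha> * x) = \<alpha> * x" for x using ss1 by (simp add: mult.assoc[symmetric])
  have pt: "(A $ i $ j)\<^sup>2 + (C $ i $ j)\<^sup>2 = (I $ i $ j)\<^sup>2 + (I $ i $ j)\<^sup>2 / \<alpha> + (1 + \<alpha>) * (S $ i $ j)\<^sup>2" for i j
  proof (cases "i = j")
    case True
    then show ?thesis using sa sa2 alp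
      by (simp add: A_def C_def I_def power2_eq_square field_simps ss1 ss2)
  next
    case False
    then show ?thesis using sa sa2 alp
      by (simp add: A_def C_def I_def power2_eq_square field_simps ss1 ss2)
  qed
  have In: "(\<Sum>i\<in>UNIV. \<Sum>j\<in>UNIV. (I $ i $ j)\<^sup>2) = real CARD('n)"
  proof -
    have "(\<Sum>j\<in>UNIV. (I $ i $ j)\<^sup>2) = 1" for i
    proof -
      have "(\<Sum>j\<in>UNIV. (I $ i $ j)\<^sup>2) = (\<Sum>j\<in>UNIV. if i = j then 1 else (0::real))"
        by (rule sum.cong) (auto simp: I_def)
      also have "\<dots> = 1" by (subst sum.delta') auto
      finally show ?thesis .
    qed
    then show ?thesis by simp
  qed
  have NSs: "(\<Sum>i\<in>UNIV. \<Sum>j\<in>UNIV. (NS $ i $ j)\<^sup>2) = (\<Sum>i\<in>UNIV. \<Sum>j\<in>UNIV. (S $ i $ j)\<^sup>2)"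
    by (simp add: NS_def)
  have ssum: "(\<Sum>i\<in>UNIV. \<Sum>j\<in>UNIV. (A $ i $ j)\<^sup>2) + (\<Sum>i\<in>UNIV. \<Sum>j\<in>UNIV. (C $ i $ j)\<^sup>2)
      = real CARD('n) + real CARD('n) / \<alpha> + (1 + \<alpha>) * (\<Sum>i\<in>UNIV. \<Sum>j\<in>UNIV. (S $ i $ j)\<^sup>2)"
  proof -
    have "(\<Sum>i\<in>UNIV. \<Sum>j\<in>UNIV. (A $ i $ j)\<^sup>2) + (\<Sum>i\<in>UNIV. \<Sum>j\<in>UNIV. (C $ i $ j)\<^sup>2)
        = (\<Sum>i\<in>UNIV. \<Sum>j\<in>UNIV. (I $ i $ j)\<^sup>2 + (I $ i $ j)\<^sup>2 / \<alpha> + (1 + \<alpha>) * (S $ i $ j)\<^sup>2)"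
      by (simp add: sum.distrib[symmetric] pt)
    also have "\<dots> = (\<Sum>i\<in>UNIV. \<Sum>j\<in>UNIV. (I $ i $ j)\<^sup>2) + (\<Sum>i\<in>UNIV. \<Sum>j\<in>UNIV. (I $ i $ j)\<^sup>2) / \<alpha>
        + (1 + \<alpha>) * (\<Sum>i\<in>UNIV. \<Sum>j\<in>UNIV. (S $ i $ j)\<^sup>2)"
      by (simp add: sum.distrib sum_divide_distrib sum_distrib_left)
    finally show ?thesis by (simp only: In)
  qed
  have "expectation (\<lambda>x. CB \<alpha> B \<sigma> S (Y x) (\<lambda>b. \<omega> b x))
      = (norm (NS *v \<theta> + \<theta>))\<^sup>2 + (1 + \<alpha>) * \<sigma>\<^sup>2 * (\<Sum>i\<in>UNIV. \<Sum>j\<in>UNIV. (NS $ i $ j)\<^sup>2)"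
  proof -
    have "Kc - real CARD('n) * \<sigma>\<^sup>2 = (norm (NS *v \<theta> + \<theta>))\<^sup>2
        + \<sigma>\<^sup>2 * ((\<Sum>i\<in>UNIV. \<Sum>j\<in>UNIV. (A $ i $ j)\<^sup>2) + (\<Sum>i\<in>UNIV. \<Sum>j\<in>UNIV. (C $ i $ j)\<^sup>2)
        - real CARD('n) / \<alpha> - real CARD('n))"
      unfolding Kc_def Av In by (simp add: algebra_simps)
    also have "\<dots> = (norm (NS *v \<theta> + \<theta>))\<^sup>2 + (1 + \<alpha>) * \<sigma>\<^sup>2 * (\<Sum>i\<in>UNIV. \<Sum>j\<in>UNIV. (NS $ i $ j)\<^sup>2)"
      unfolding ssum NSs by (simp add: algebra_simps)
    finally show ?thesis using LHS by simp
  qed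
  also have "\<dots> = (\<integral>z. (norm (\<theta> - S *v z))\<^sup>2 \<partial>GT)"
    using QT by (simp add: nsv)
  finally show ?thesis by (simp add: GT_def)
qed

end
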